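(* Let $H$ be a connected graph with $k=|V(H)|>1$ vertices that does not contain two true twins or does not contain two false twins. Then for every $p\in[0,1)$ there is no deterministic algorithm solving the Delayed Connected $H$-Node-Deletion Problem with predictions that has both consistency less than $k-\frac{1}{2-p}(k-1)$ and robustness less than $k+\frac{p}{1-p}$.
   Context: All graphs are finite, simple and undirected. Two distinct vertices are false twins if they have the same open neighborhood, and true twins if they have the same closed neighborhood $N[v]=N(v)\cup\{v\}$. An induced copy of $H$ in $G$ is an induced subgraph isomorphic to $H$; $G$ is $H$-free if it has none. An online graph $G$ has vertices $v_1,\dots,v_n$ revealed one at a time; $G_t=G[\{v_1,\dots,v_t\}]$. Delayed Connected $H$-Node-Deletion Problem with predictions (fixed connected $H$): when $v_t$ is revealed the algorithm receives a bit $u_t(G)\in\{0,1\}$; it must choose sets $S_1\subseteq\dots\subseteq S_n$ with $S_t\subseteq V(G_t)$ and $G_t-S_t$ $H$-free for each $t$, where $S_t$ depends only on $G_t$ and $u_1(G),\dots,u_t(G)$; the cost is $|S_n|$. $\mathrm{OPT}(G)$ is the minimum size of $S\subseteq V(G)$ with $G-S$ $H$-free. The advice is correct if the set of vertices with bit $1$ is a minimum-size such set. An algorithm is $(r,w)$-competitive if there is a constant $\alpha\ge0$ such that for every online graph $G$: for some correct advice its cost is at most $r\cdot\mathrm{OPT}(G)+\alpha$, and for every advice (correct or not) its cost is at most $w\cdot\mathrm{OPT}(G)+\alpha$. Consistency (resp. robustness) is the infimum of such $r$ (resp. $w$). *)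

theory Defs
  imports Complex_Main "HOL-Library.Extended_Real"
begin

definition simple_graph :: "'a set \<Rightarrow> ('a \<Rightarrow> 'a \<Rightarrow> bool) \<Rightarrow> bool" where
  "simple_graph V E \<longleftrightarrow> finite V \<and> (\<forall>x y. E x y \<longrightarrow> x \<in> V \<and> y \<in> V)
     \<and> (\<forall>x y. E x y \<longrightarrow> E y x) \<and> (\<forall>x. \<not> E x x)"

definition connected_graph :: "'a set \<Rightarrow> ('a \<Rightarrow> 'a \<Rightarrow> bool) \<Rightarrow> bool" where
  "connected_graph V E \<longleftrightarrow> (\<forall>a\<in>V. \<forall>b\<in>V. (\<lambda>x y. E x y \<and> x \<in> V \<and> y \<in> V)\<^sup>*\<^sup>* a b)"

definition open_nbhd :: "'a set \<Rightarrow> ('a \<Rightarrow> 'a \<Rightarrow> bool) \<Rightarrow> 'a \<Rightarrow> 'a set" where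
  "open_nbhd V E v = {w \<in> V. E v w}"

definition closed_nbhd :: "'a set \<Rightarrow> ('a \<Rightarrow> 'a \<Rightarrow> bool) \<Rightarrow> 'a \<Rightarrow> 'a set" where
  "closed_nbhd V E v = insert v (open_nbhd V E v)"

definition has_false_twins :: "'a set \<Rightarrow> ('a \<Rightarrow> 'a \<Rightarrow> bool) \<Rightarrow> bool" where
  "has_false_twins V E \<longleftrightarrow> (\<exists>u\<in>V. \<exists>v\<in>V. u \<noteq> v \<and> open_nbhd V E u = open_nbhd V E v)"

definition has_true_twins :: "'a set \<Rightarrow> ('a \<Rightarrow> 'a \<Rightarrow> bool) \<Rightarrow> bool" where
  "has_true_twins V E \<longleftrightarrow> (\<exists>u\<in>V. \<exists>v\<in>V. u \<noteq> v \<and> closed_nbhd V E u = closed_nbhd V E v)"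

definition has_induced_copy ::
    "'h set \<Rightarrow> ('h \<Rightarrow> 'h \<Rightarrow> bool) \<Rightarrow> 'a set \<Rightarrow> ('a \<Rightarrow> 'a \<Rightarrow> bool) \<Rightarrow> bool" where
  "has_induced_copy VH EH X E \<longleftrightarrow>
     (\<exists>f. inj_on f VH \<and> f ` VH \<subseteq> X \<and> (\<forall>a\<in>VH. \<forall>b\<in>VH. E (f a) (f b) \<longleftrightarrow> EH a b))"

definition H_free :: "'h set \<Rightarrow> ('h \<Rightarrow> 'h \<Rightarrow> bool) \<Rightarrow> 'a set \<Rightarrow> ('a \<Rightarrow> 'a \<Rightarrow> bool) \<Rightarrow> bool" where
  "H_free VH EH X E \<longleftrightarrow> \<not> has_induced_copy VH EH X E"

text \<open>An online graph with n vertices: vertices 0,...,n-1 (vertex i is v_{i+1}),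
  revealed in increasing order.  G_t has vertex set {0..<t}.\<close>
definition online_graph :: "nat \<Rightarrow> (nat \<Rightarrow> nat \<Rightarrow> bool) \<Rightarrow> bool" where
  "online_graph n E \<longleftrightarrow> simple_graph {0..<n} E"

definition trunc_graph :: "nat \<Rightarrow> (nat \<Rightarrow> nat \<Rightarrow> bool) \<Rightarrow> nat \<Rightarrow> nat \<Rightarrow> bool" where
  "trunc_graph t E = (\<lambda>i j. i < t \<and> j < t \<and> E i j)"

definition trunc_advice :: "nat \<Rightarrow> (nat \<Rightarrow> bool) \<Rightarrow> nat \<Rightarrow> bool" where
  "trunc_advice t u = (\<lambda>i. i < t \<and> u i)"

definition OPT :: "'h set \<Rightarrow> ('h \<Rightarrow> 'h \<Rightarrow> bool) \<Rightarrow> nat \<Rightarrow> (nat \<Rightarrow> nat \<Rightarrow> bool) \<Rightarrow> nat" where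
  "OPT VH EH n E = (LEAST m. \<exists>S. S \<subseteq> {0..<n} \<and> card S = m \<and> H_free VH EH ({0..<n} - S) E)"

definition correct_advice ::
    "'h set \<Rightarrow> ('h \<Rightarrow> 'h \<Rightarrow> bool) \<Rightarrow> nat \<Rightarrow> (nat \<Rightarrow> nat \<Rightarrow> bool) \<Rightarrow> (nat \<Rightarrow> bool) \<Rightarrow> bool" where
  "correct_advice VH EH n E u \<longleftrightarrow>
     H_free VH EH ({0..<n} - {i. i < n \<and> u i}) E \<and> card {i. i < n \<and> u i} = OPT VH EH n E"

text \<open>A deterministic online algorithm: at time t it sees only t, G_t and the bits u_1..u_t,
  and outputs S_t.  Type: A t G_t u_{\<le>t}.\<close>
type_synonym online_alg = "nat \<Rightarrow> (nat \<Rightarrow> nat \<Rightarrow> bool) \<Rightarrow> (nat \<Rightarrow> bool) \<Rightarrow> nat set"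

definition alg_out :: "online_alg \<Rightarrow> (nat \<Rightarrow> nat \<Rightarrow> bool) \<Rightarrow> (nat \<Rightarrow> bool) \<Rightarrow> nat \<Rightarrow> nat set" where
  "alg_out A E u t = A t (trunc_graph t E) (trunc_advice t u)"

definition valid_run ::
    "'h set \<Rightarrow> ('h \<Rightarrow> 'h \<Rightarrow> bool) \<Rightarrow> online_alg \<Rightarrow> nat \<Rightarrow> (nat \<Rightarrow> nat \<Rightarrow> bool) \<Rightarrow> (nat \<Rightarrow> bool) \<Rightarrow> bool" where
  "valid_run VH EH A n E u \<longleftrightarrow>
     (\<forall>t\<le>n. alg_out A E u t \<subseteq> {0..<t}
        \<and> H_free VH EH ({0..<t} - alg_out A E u t) (trunc_graph t E)
        \<and> (t < n \<longrightarrow> alg_out A E u t \<subseteq> alg_out A E u (Suc t)))"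

definition solves :: "'h set \<Rightarrow> ('h \<Rightarrow> 'h \<Rightarrow> bool) \<Rightarrow> online_alg \<Rightarrow> bool" where
  "solves VH EH A \<longleftrightarrow> (\<forall>n E u. online_graph n E \<longrightarrow> valid_run VH EH A n E u)"

definition cost :: "online_alg \<Rightarrow> nat \<Rightarrow> (nat \<Rightarrow> nat \<Rightarrow> bool) \<Rightarrow> (nat \<Rightarrow> bool) \<Rightarrow> nat" where
  "cost A n E u = card (alg_out A E u n)"

definition competitive ::
    "'h set \<Rightarrow> ('h \<Rightarrow> 'h \<Rightarrow> bool) \<Rightarrow> online_alg \<Rightarrow> real \<Rightarrow> real \<Rightarrow> bool" where
  "competitive VH EH A r w \<longleftrightarrow> (\<exists>\<alpha>::real. \<alpha> \<ge> 0 \<and>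
     (\<forall>n E. online_graph n E \<longrightarrow>
        (\<exists>u. correct_advice VH EH n E u \<and> real (cost A n E u) \<le> r * real (OPT VH EH n E) + \<alpha>)
      \<and> (\<forall>u. real (cost A n E u) \<le> w * real (OPT VH EH n E) + \<alpha>)))"

definition consistency :: "'h set \<Rightarrow> ('h \<Rightarrow> 'h \<Rightarrow> bool) \<Rightarrow> online_alg \<Rightarrow> ereal" where
  "consistency VH EH A = Inf {ereal r | r. \<exists>w. competitive VH EH A r w}"

definition robustness :: "'h set \<Rightarrow> ('h \<Rightarrow> 'h \<Rightarrow> bool) \<Rightarrow> online_alg \<Rightarrow> ereal" where
  "robustness VH EH A = Inf {ereal w | w. \<exists>r. competitive VH EH A r w}"

end

theory Submission
  imports Defs
begin


lemma competitive_mono: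
  assumes "competitive VH EH A r w" "r \<le> r'" "w \<le> w'"
  shows "competitive VH EH A r' w'"
proof -
  obtain \<alpha> where a: "\<alpha> \<ge> 0" and H: "\<forall>n E. online_graph n E \<longrightarrow>
        (\<exists>u. correct_advice VH EH n E u \<and> real (cost A n E u) \<le> r * real (OPT VH EH n E) + \<alpha>)
      \<and> (\<forall>u. real (cost A n E u) \<le> w * real (OPT VH EH n E) + \<alpha>)"
    using assms(1) unfolding competitive_def by blast
  have "\<forall>n E. online_graph n E \<longrightarrow>
        (\<exists>u. correct_advice VH EH n E u \<and> real (cost A n E u) \<le> r' * real (OPT VH EH n E) + \<alpha>)
      \<and> (\<forall>u. real (cost A n E u) \<le> w' * real (OPT VH EH n E) + \<alpha>)"
  proof (intro allI impI conjI)
    fix n E assume g: "online_graph n E"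
    have m1: "r * real (OPT VH EH n E) \<le> r' * real (OPT VH EH n E)"
      by (rule mult_right_mono) (use assms in auto)
    have m2: "w * real (OPT VH EH n E) \<le> w' * real (OPT VH EH n E)"
      by (rule mult_right_mono) (use assms in auto)
    show "\<exists>u. correct_advice VH EH n E u \<and> real (cost A n E u) \<le> r' * real (OPT VH EH n E) + \<alpha>"
      using H g m1 by fastforce
    fix u
    have "real (cost A n E u) \<le> w * real (OPT VH EH n E) + \<alpha>" using H g by blast
      then show "real (cost A n E u) \<le> w' * real (OPT VH EH n E) + \<alpha>" using m2 by linarith
  qed
  then show ?thesis unfolding competitive_def using a by blast
qed

lemma competitive_combine:
  assumes "competitive VH EH A r1 w1" "competitive VH EH A r2 w2"
  shows "competitive VH EH A r1 w2"
proof -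
  obtain \<alpha> where a: "\<alpha> \<ge> 0" and H: "\<forall>n E. online_graph n E \<longrightarrow>
        (\<exists>u. correct_advice VH EH n E u \<and> real (cost A n E u) \<le> r1 * real (OPT VH EH n E) + \<alpha>)
      \<and> (\<forall>u. real (cost A n E u) \<le> w1 * real (OPT VH EH n E) + \<alpha>)"
    using assms(1) unfolding competitive_def by blast
  obtain \<beta> where b: "\<beta> \<ge> 0" and H2: "\<forall>n E. online_graph n E \<longrightarrow>
        (\<exists>u. correct_advice VH EH n E u \<and> real (cost A n E u) \<le> r2 * real (OPT VH EH n E) + \<beta>)
      \<and> (\<forall>u. real (cost A n E u) \<le> w2 * real (OPT VH EH n E) + \<beta>)"
    using assms(2) unfolding competitive_def by blast
  have "\<forall>n E. online_graph n E \<longrightarrow>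
        (\<exists>u. correct_advice VH EH n E u \<and> real (cost A n E u) \<le> r1 * real (OPT VH EH n E) + max \<alpha> \<beta>)
      \<and> (\<forall>u. real (cost A n E u) \<le> w2 * real (OPT VH EH n E) + max \<alpha> \<beta>)"
  proof (intro allI impI conjI)
    fix n E assume g: "online_graph n E"
    obtain u where "correct_advice VH EH n E u" "real (cost A n E u) \<le> r1 * real (OPT VH EH n E) + \<alpha>"
      using H g by blast
    then show "\<exists>u. correct_advice VH EH n E u \<and> real (cost A n E u) \<le> r1 * real (OPT VH EH n E) + max \<alpha> \<beta>"
      by (intro exI[of _ u]) auto
    fix u
    have "real (cost A n E u) \<le> w2 * real (OPT VH EH n E) + \<beta>" using H2 g by blast
      then show "real (cost A n E u) \<le> w2 * real (OPT VH EH n E) + max \<alpha> \<beta>" by linarith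
  qed
  then show ?thesis unfolding competitive_def using a b
    by (intro exI[of _ "max \<alpha> \<beta>"]) auto
qed

lemma valid_run_mono:
  assumes "valid_run VH EH A n E u" "t \<le> s" "s \<le> n"
  shows "alg_out A E u t \<subseteq> alg_out A E u s"
  using assms(2,3)
proof (induction s)
  case 0 then show ?case by simp
next
  case (Suc s)
  show ?case
  proof (cases "t = Suc s")
    case True then show ?thesis by simp
  next
    case False
    then have "t \<le> s" using Suc by simp
    moreover have "s < n" using Suc.prems by simp
    then have "alg_out A E u s \<subseteq> alg_out A E u (Suc s)"
      using assms(1) unfolding valid_run_def by auto
    ultimately show ?thesis using Suc by auto
  qed
qed

lemma grow_lemma:
  fixes f :: "nat \<Rightarrow> nat"
  assumes "f 0 = 0" "\<And>t. f (Suc t) \<le> f t + 1" "f T > N"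
  shows "\<exists>t<T. f t \<ge> N \<and> f (Suc t) > f t"
  using assms(3)
proof (induction T)
  case 0 then show ?case using assms(1) by simp
next
  case (Suc T)
  show ?case
  proof (cases "f T > N")
    case True then show ?thesis using Suc.IH by (meson less_SucI)
  next
    case False
    then have "f T \<ge> N" using Suc.prems assms(2)[of T] by linarith
    moreover have "f (Suc T) > f T" using False Suc.prems by linarith
    ultimately show ?thesis by blast
  qed
qed



locale adv_setup =
  fixes VH :: "'h set" and EH :: "'h \<Rightarrow> 'h \<Rightarrow> bool" and \<tau> :: bool and h1 :: 'h and A :: online_alg
  assumes sg: "simple_graph VH EH" and h1: "h1 \<in> VH"
    and twins: "if \<tau> then \<not> has_true_twins VH EH else \<not> has_false_twins VH EH"
    and solv: "solves VH EH A"
begin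

lemma finVH: "finite VH" using sg unfolding simple_graph_def by blast
lemma irr: "\<not> EH a a" using sg unfolding simple_graph_def by blast
lemma sym: "EH a b \<Longrightarrow> EH b a" using sg unfolding simple_graph_def by blast
lemma inV: "EH a b \<Longrightarrow> a \<in> VH \<and> b \<in> VH" using sg unfolding simple_graph_def by blast

definition ADJ :: "'h \<Rightarrow> 'h \<Rightarrow> bool" where "ADJ a b = ((\<tau> \<and> a = b) \<or> EH a b)"

definition Eof :: "'h list \<Rightarrow> nat \<Rightarrow> nat \<Rightarrow> bool" where
  "Eof l i j = (i < length l \<and> j < length l \<and> i \<noteq> j \<and> ADJ (l!i) (l!j))"

definition adv :: "'h list \<Rightarrow> nat \<Rightarrow> bool" where "adv l i = (i < length l \<and> l!i = h1)"

lemma trunc_Eof: "trunc_graph t (Eof l) = Eof (take t l)"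
  unfolding trunc_graph_def Eof_def by (auto simp: fun_eq_iff)

lemma trunc_adv: "trunc_advice t (adv l) = adv (take t l)"
  unfolding trunc_advice_def adv_def by (auto simp: fun_eq_iff)

lemma online_Eof: "online_graph (length l) (Eof l)"
  unfolding online_graph_def simple_graph_def Eof_def ADJ_def using sym by auto

lemma copy_if:
  assumes X: "X \<subseteq> {0..<length l}" and all: "\<forall>h\<in>VH. \<exists>i\<in>X. l!i = h"
  shows "has_induced_copy VH EH X (Eof l)"
proof -
  define g where "g h = (SOME i. i \<in> X \<and> l!i = h)" for h
  have g: "g h \<in> X \<and> l!(g h) = h" if "h \<in> VH" for h
    unfolding g_def using all that by (metis (mono_tags, lifting) someI_ex)
  have inj: "inj_on g VH" by (metis g inj_onI)
  have img: "g ` VH \<subseteq> X" using g by auto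
  have emb: "\<forall>a\<in>VH. \<forall>b\<in>VH. Eof l (g a) (g b) \<longleftrightarrow> EH a b"
  proof (intro ballI)
    fix a b assume a: "a \<in> VH" and b: "b \<in> VH"
    have la: "g a < length l" "g b < length l" using g[OF a] g[OF b] X by (auto simp: subset_iff)
    show "Eof l (g a) (g b) \<longleftrightarrow> EH a b"
    proof (cases "a = b")
      case True then show ?thesis using irr unfolding Eof_def by auto
    next
      case False
      then have "g a \<noteq> g b" using g a b by metis
      then show ?thesis using la g a b False unfolding Eof_def ADJ_def by auto
    qed
  qed
  show ?thesis unfolding has_induced_copy_def using inj img emb by blast
qed

lemma copy_only_if:
  assumes X: "X \<subseteq> {0..<length l}" and sl: "set l \<subseteq> VH"
    and cp: "has_induced_copy VH EH X (Eof l)"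
  shows "\<forall>h\<in>VH. \<exists>i\<in>X. l!i = h"
proof -
  obtain f where inj: "inj_on f VH" and img: "f ` VH \<subseteq> X"
    and emb: "\<forall>a\<in>VH. \<forall>b\<in>VH. Eof l (f a) (f b) \<longleftrightarrow> EH a b"
    using cp unfolding has_induced_copy_def by blast
  define g where "g a = l!(f a)" for a
  have ran: "f a < length l" if "a \<in> VH" for a using img X that by (auto simp: subset_iff image_subset_iff)
  have gV: "g a \<in> VH" if "a \<in> VH" for a using ran[OF that] sl unfolding g_def by auto
  have ginj: "inj_on g VH"
  proof (rule inj_onI)
    fix a b assume a: "a \<in> VH" and b: "b \<in> VH" and gab: "g a = g b"
    show "a = b"
    proof (rule ccontr)
      assume ne: "a \<noteq> b"
      have fne: "f c \<noteq> f d" if "c \<in> VH" "d \<in> VH" "c \<noteq> d" for c d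
        using inj that by (meson inj_on_eq_iff)
      have key: "EH a c \<longleftrightarrow> EH b c" if c: "c \<in> VH" "c \<noteq> a" "c \<noteq> b" for c
      proof -
        have "EH a c \<longleftrightarrow> Eof l (f a) (f c)" using emb a c by auto
        also have "\<dots> \<longleftrightarrow> ADJ (g a) (g c)" unfolding Eof_def g_def using ran a c fne[of a c] by auto
        also have "\<dots> \<longleftrightarrow> ADJ (g b) (g c)" using gab by simp
        also have "\<dots> \<longleftrightarrow> Eof l (f b) (f c)" unfolding Eof_def g_def using ran b c fne[of b c] by auto
        also have "\<dots> \<longleftrightarrow> EH b c" using emb b c by auto
        finally show ?thesis .
      qed
      have eab: "EH a b \<longleftrightarrow> \<tau>"
      proof -
        have "EH a b \<longleftrightarrow> Eof l (f a) (f b)" using emb a b by auto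
        also have "\<dots> \<longleftrightarrow> ADJ (g a) (g b)" unfolding Eof_def g_def using ran a b fne[of a b] ne by auto
        also have "\<dots> \<longleftrightarrow> \<tau>" unfolding ADJ_def using gab irr by auto
        finally show ?thesis .
      qed
      show False
      proof (cases \<tau>)
        case True
        have "\<forall>w\<in>VH. (w = a \<or> EH a w) \<longleftrightarrow> (w = b \<or> EH b w)"
          using key eab True sym by blast
        then have "closed_nbhd VH EH a = closed_nbhd VH EH b"
          unfolding closed_nbhd_def open_nbhd_def using a b by blast
        then have "has_true_twins VH EH" unfolding has_true_twins_def using a b ne by blast
        then show False using twins True by simp
      next
        case False
        have "\<forall>w\<in>VH. EH a w \<longleftrightarrow> EH b w"
          using key eab False sym irr by blast
        then have "open_nbhd VH EH a = open_nbhd VH EH b"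
          unfolding open_nbhd_def by blast
        then have "has_false_twins VH EH" unfolding has_false_twins_def using a b ne by blast
        then show False using twins False by simp
      qed
    qed
  qed
  have "g ` VH = VH" using endo_inj_surj[OF finVH _ ginj] gV by blast
  then show ?thesis using img unfolding g_def by force
qed

lemma free_iff:
  assumes X: "X \<subseteq> {0..<length l}" and sl: "set l \<subseteq> VH"
  shows "H_free VH EH X (Eof l) \<longleftrightarrow> (\<exists>h\<in>VH. \<forall>i\<in>X. l!i \<noteq> h)"
  unfolding H_free_def using copy_if[OF X] copy_only_if[OF X sl] by blast

lemma OPT_le:
  assumes sl: "set l \<subseteq> VH" and h: "h \<in> VH"
  shows "OPT VH EH (length l) (Eof l) \<le> card {i. i < length l \<and> l!i = h}"
proof -
  let ?S = "{i. i < length l \<and> l!i = h}"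
  have "H_free VH EH ({0..<length l} - ?S) (Eof l)"
    using free_iff[OF _ sl] h by auto
  moreover have "?S \<subseteq> {0..<length l}" by auto
  ultimately show ?thesis unfolding OPT_def by (intro Least_le) blast
qed

end


context adv_setup begin

definition DD :: "'h list \<Rightarrow> nat set" where "DD l = A (length l) (Eof l) (adv l)"
definition killed :: "'h list \<Rightarrow> 'h \<Rightarrow> bool" where
  "killed l h = (\<forall>i<length l. l!i = h \<longrightarrow> i \<in> DD l)"
definition nxt :: "'h list \<Rightarrow> 'h" where
  "nxt l = (if killed l h1 then h1 else SOME h. h \<in> VH \<and> killed l h)"

primrec L :: "nat \<Rightarrow> 'h list" where
  "L 0 = []" | "L (Suc t) = L t @ [nxt (L t)]"

lemma length_L[simp]: "length (L t) = t" by (induction t) auto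

lemma take_L: "s \<le> t \<Longrightarrow> take s (L t) = L s"
proof (induction t)
  case 0 then show ?case by simp
next
  case (Suc t)
  then show ?case by (cases "s = Suc t") auto
qed

lemma alg_out_eq: "t \<le> length l \<Longrightarrow> alg_out A (Eof l) (adv l) t = DD (take t l)"
  unfolding alg_out_def DD_def trunc_Eof trunc_adv by (simp add: min_def)

lemma valid_l: "valid_run VH EH A (length l) (Eof l) (adv l)"
  using solv online_Eof unfolding solves_def by blast

lemma DD_sub: "DD l \<subseteq> {0..<length l}"
  using valid_l[of l] alg_out_eq[of "length l" l] unfolding valid_run_def by auto

lemma DD_free: "H_free VH EH ({0..<length l} - DD l) (Eof l)"
  using valid_l[of l] alg_out_eq[of "length l" l] unfolding valid_run_def by (auto simp: trunc_Eof)

lemma killed_ex: "\<exists>h\<in>VH. killed l h"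
proof -
  have "\<not> has_induced_copy VH EH ({0..<length l} - DD l) (Eof l)" using DD_free unfolding H_free_def .
  then have "\<not> (\<forall>h\<in>VH. \<exists>i\<in>{0..<length l} - DD l. l!i = h)" using copy_if[of "{0..<length l} - DD l" l] by blast
  then obtain h where h: "h \<in> VH" "\<forall>i\<in>{0..<length l} - DD l. l!i \<noteq> h" by blast
  have "killed l h" unfolding killed_def
  proof (intro allI impI)
    fix i assume "i < length l" "l!i = h"
    then show "i \<in> DD l" using h(2) by auto
  qed
  then show ?thesis using h(1) by blast
qed

lemma nxt_props: "nxt l \<in> VH \<and> killed l (nxt l)"
proof (cases "killed l h1")
  case True then show ?thesis unfolding nxt_def using h1 by simp
next
  case False
  then show ?thesis unfolding nxt_def using killed_ex[of l] someI_ex[of "\<lambda>h. h \<in> VH \<and> killed l h"] by auto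
qed

definition D :: "nat \<Rightarrow> nat set" where "D t = DD (L t)"
definition c :: "nat \<Rightarrow> 'h" where "c i = nxt (L i)"

lemma nth_L: "i < t \<Longrightarrow> L t ! i = c i"
proof -
  assume "i < t"
  then have "L t ! i = take (Suc i) (L t) ! i" by simp
  also have "\<dots> = L (Suc i) ! i" using \<open>i < t\<close> take_L[of "Suc i" t] by simp
  also have "\<dots> = c i" unfolding c_def by (simp add: nth_append)
  finally show ?thesis .
qed

lemma c_V: "c i \<in> VH" unfolding c_def using nxt_props by blast

lemma set_L: "set (L t) \<subseteq> VH"
  using c_V nth_L by (auto simp: set_conv_nth)

lemma D_sub: "D t \<subseteq> {0..<t}" unfolding D_def using DD_sub[of "L t"] by simp

lemma D_mono: "D t \<subseteq> D (Suc t)"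
proof -
  have "alg_out A (Eof (L (Suc t))) (adv (L (Suc t))) t \<subseteq> alg_out A (Eof (L (Suc t))) (adv (L (Suc t))) (Suc t)"
    using valid_l[of "L (Suc t)"] unfolding valid_run_def by simp
  then show ?thesis unfolding D_def using alg_out_eq[of t "L (Suc t)"] alg_out_eq[of "Suc t" "L (Suc t)"]
    take_L[of t "Suc t"] by simp
qed

lemma killed_c: "i < t \<Longrightarrow> c i = c t \<Longrightarrow> i \<in> D t"
  using nxt_props[of "L t"] nth_L unfolding killed_def D_def c_def[of t] by auto

lemma inv: "i < t \<Longrightarrow> j < t \<Longrightarrow> i \<notin> D t \<Longrightarrow> j \<notin> D t \<Longrightarrow> c i = c j \<Longrightarrow> i = j"
proof (induction t arbitrary: i j)
  case 0 then show ?case by simp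
next
  case (Suc t)
  have m: "D t \<subseteq> D (Suc t)" by (rule D_mono)
  show ?case
  proof (cases "i = t \<or> j = t")
    case True
    then show ?thesis
    proof
      assume it: "i = t"
      show ?thesis
      proof (rule ccontr)
        assume "i \<noteq> j"
        then have "j < t" using Suc it by simp
        then have "j \<in> D t" using killed_c Suc it by metis
        then show False using m Suc by auto
      qed
    next
      assume jt: "j = t"
      show ?thesis
      proof (rule ccontr)
        assume "i \<noteq> j"
        then have "i < t" using Suc jt by simp
        then have "i \<in> D t" using killed_c Suc jt by metis
        then show False using m Suc by auto
      qed
    qed
  next
    case False
    then have "i < t" "j < t" using Suc by auto
    moreover have "i \<notin> D t" "j \<notin> D t" using m Suc by auto
    ultimately show ?thesis using Suc by blast
  qed
qed

definition U :: "nat \<Rightarrow> nat set" where "U t = {0..<t} - D t"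

lemma card_D_U: "card (D t) + card (U t) = t"
proof -
  have "card (U t) = t - card (D t)" unfolding U_def using D_sub[of t]
    by (simp add: card_Diff_subset finite_subset)
  moreover have "card (D t) \<le> t" using D_sub[of t] by (metis card_atLeastLessThan card_mono finite_atLeastLessThan diff_zero)
  ultimately show ?thesis by simp
qed

lemma inj_U: "inj_on c (U t)"
  using inv unfolding U_def by (auto intro!: inj_onI)

lemma card_U: "card (U t) \<le> card VH"
  using card_inj_on_le[OF inj_U _ finVH] c_V by blast

lemma card_U_killed: assumes "killed (L t) h1" shows "card (U t) \<le> card VH - 1"
proof -
  have "c ` U t \<subseteq> VH - {h1}"
  proof
    fix y assume "y \<in> c ` U t"
    then obtain i where i: "i \<in> U t" "y = c i" by blast
    have "y \<noteq> h1"
    proof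
      assume "y = h1"
      then have "L t ! i = h1" using i nth_L unfolding U_def by auto
      then have "i \<in> D t" using assms i unfolding killed_def D_def U_def by auto
      then show False using i unfolding U_def by auto
    qed
    then show "y \<in> VH - {h1}" using i c_V by auto
  qed
  then have "card (U t) \<le> card (VH - {h1})" using card_inj_on_le[OF inj_U _] finVH by blast
  then show ?thesis using h1 finVH by simp
qed

end


lemma filter_pad_ge:
  "h \<in> set hs \<Longrightarrow> m \<le> length (filter (\<lambda>y. y = h) (concat (map (\<lambda>g. replicate m g) hs)))"
  by (induction hs) auto

context adv_setup begin

definition x :: "nat \<Rightarrow> nat" where "x t = card {i. i < t \<and> c i = h1}"

lemma cls_L: "{i. i < length (L t) \<and> L t ! i = h} = {i. i < t \<and> c i = h}"
  using nth_L by auto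

lemma x0: "x 0 = 0" unfolding x_def by simp

lemma xSuc: "x (Suc t) = x t + (if c t = h1 then 1 else 0)"
proof -
  have "{i. i < Suc t \<and> c i = h1} = {i. i < t \<and> c i = h1} \<union> (if c t = h1 then {t} else {})"
    by (auto simp: less_Suc_eq)
  then show ?thesis unfolding x_def by auto
qed

definition OPTt :: "nat \<Rightarrow> nat" where "OPTt t = OPT VH EH t (Eof (L t))"

lemma opt_x: "OPTt t \<le> x t"
  using OPT_le[OF set_L h1, of t] cls_L unfolding OPTt_def x_def by simp

lemma opt_sum: "(card VH - 1) * OPTt t + x t \<le> t"
proof -
  let ?C = "\<lambda>h. {i. i < t \<and> c i = h}"
  have le: "OPTt t \<le> card (?C h)" if "h \<in> VH" for h
    using OPT_le[OF set_L that, of t] cls_L unfolding OPTt_def by simp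
  have "(card VH - 1) * OPTt t = (\<Sum>h\<in>VH - {h1}. OPTt t)" using h1 finVH by simp
  also have "\<dots> \<le> (\<Sum>h\<in>VH - {h1}. card (?C h))" by (rule sum_mono) (use le in auto)
  also have "\<dots> = card (\<Union>h\<in>VH - {h1}. ?C h)"
    by (rule card_UN_disjoint[symmetric]) (use finVH in auto)
  also have "(\<Union>h\<in>VH - {h1}. ?C h) = {0..<t} - ?C h1" using c_V by auto
  also have "card \<dots> = t - x t" unfolding x_def by (subst card_Diff_subset) auto
  finally have "(card VH - 1) * OPTt t \<le> t - x t" .
  moreover have "x t \<le> t" unfolding x_def
    by (metis (no_types, lifting) card_mono card_atLeastLessThan diff_zero finite_atLeastLessThan atLeastLessThan_iff mem_Collect_eq subsetI zero_le)
  ultimately show ?thesis by linarith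
qed

lemma cost_L: "cost A t (Eof (L t)) (adv (L t)) = card (D t)"
  unfolding cost_def D_def using alg_out_eq[of t "L t"] take_L[of t t] by simp

lemma cons_bound:
  assumes kill: "killed (L t) h1" and r: "r \<ge> 0"
    and H: "\<forall>n E. online_graph n E \<longrightarrow> (\<exists>u. correct_advice VH EH n E u \<and> real (cost A n E u) \<le> r * real (OPT VH EH n E) + \<alpha>)"
  shows "real (card (D t)) \<le> r * real (x t) + \<alpha>"
proof -
  obtain hs where hs: "set hs = VH - {h1}" using finite_list[of "VH - {h1}"] finVH by auto
  define pad where "pad = concat (map (\<lambda>h. replicate (Suc (x t)) h) hs)"
  define l' where "l' = L t @ pad"
  have spad: "set pad = VH - {h1}" unfolding pad_def hs[symmetric] by (induction hs) auto
  have sl': "set l' \<subseteq> VH" unfolding l'_def set_append using set_L[of t] spad by blast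
  define n' where "n' = length l'"
  have tl: "take t l' = L t" unfolding l'_def by simp
  have tn: "t \<le> n'" unfolding n'_def l'_def by simp
  have cnt: "card {i. i < length l' \<and> l'!i = h} = length (filter (\<lambda>y. y = h) l')" for h
    using length_filter_conv_card[of "\<lambda>y. y = h" l'] by simp
  have c1: "card {i. i < n' \<and> l'!i = h1} = x t"
  proof -
    have "filter (\<lambda>y. y = h1) pad = []" using spad by (auto simp: filter_empty_conv)
    then have "length (filter (\<lambda>y. y = h1) l') = length (filter (\<lambda>y. y = h1) (L t))" unfolding l'_def by simp
    also have "\<dots> = x t" using length_filter_conv_card[of "\<lambda>y. y = h1" "L t"] cls_L unfolding x_def by simp
    finally show ?thesis using cnt unfolding n'_def by simp
  qed
  have c2: "card {i. i < n' \<and> l'!i = h} \<ge> Suc (x t)" if "h \<in> VH - {h1}" for h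
  proof -
    have "Suc (x t) \<le> length (filter (\<lambda>y. y = h) pad)" unfolding pad_def
      by (rule filter_pad_ge) (use hs that in auto)
    also have "\<dots> \<le> length (filter (\<lambda>y. y = h) l')" unfolding l'_def by simp
    finally show ?thesis using cnt unfolding n'_def by simp
  qed
  obtain u where cor: "correct_advice VH EH n' (Eof l') u"
    and cb: "real (cost A n' (Eof l') u) \<le> r * real (OPT VH EH n' (Eof l')) + \<alpha>"
    using H online_Eof[of l'] unfolding n'_def by blast
  define M where "M = {i. i < n' \<and> u i}"
  have Mf: "H_free VH EH ({0..<n'} - M) (Eof l')" and Mc: "card M = OPT VH EH n' (Eof l')"
    using cor unfolding correct_advice_def M_def by auto
  have opt': "OPT VH EH n' (Eof l') \<le> x t" using OPT_le[OF sl' h1] c1 unfolding n'_def by simp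
  have finM: "finite M" unfolding M_def by simp
  obtain h where h: "h \<in> VH" "\<forall>i\<in>{0..<n'} - M. l'!i \<noteq> h"
    using Mf free_iff[of "{0..<n'} - M" l'] sl' unfolding n'_def by auto
  have ChM: "{i. i < n' \<and> l'!i = h} \<subseteq> M" using h by auto
  have hh1: "h = h1"
  proof (rule ccontr)
    assume "h \<noteq> h1"
    then have "Suc (x t) \<le> card {i. i < n' \<and> l'!i = h}" using c2 h by auto
    also have "\<dots> \<le> card M" using ChM finM by (rule card_mono[rotated])
    finally show False using Mc opt' by simp
  qed
  have MC: "{i. i < n' \<and> l'!i = h1} = M"
    by (rule card_seteq[OF finM]) (use ChM hh1 c1 Mc opt' in auto)
  have ta: "trunc_advice n' u = adv l'"
  proof
    fix i
    have "trunc_advice n' u i \<longleftrightarrow> i \<in> M" unfolding trunc_advice_def M_def by simp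
    also have "\<dots> \<longleftrightarrow> adv l' i" unfolding MC[symmetric] adv_def n'_def by simp
    finally show "trunc_advice n' u i = adv l' i" .
  qed
  have costeq: "cost A n' (Eof l') u = card (alg_out A (Eof l') (adv l') n')"
    unfolding cost_def alg_out_def ta
    by (simp add: trunc_adv n'_def)
  have vr: "valid_run VH EH A n' (Eof l') (adv l')" using valid_l[of l'] unfolding n'_def .
  have "D t = alg_out A (Eof l') (adv l') t" unfolding D_def
    using alg_out_eq[of t l'] tn tl unfolding n'_def by simp
  also have "\<dots> \<subseteq> alg_out A (Eof l') (adv l') n'" using valid_run_mono[OF vr tn] by simp
  finally have sub: "D t \<subseteq> alg_out A (Eof l') (adv l') n'" .
  have "alg_out A (Eof l') (adv l') n' \<subseteq> {0..<n'}" using vr unfolding valid_run_def by simp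
  then have "finite (alg_out A (Eof l') (adv l') n')" by (rule finite_subset) simp
  then have "card (D t) \<le> cost A n' (Eof l') u" using sub costeq by (simp add: card_mono)
  then have "real (card (D t)) \<le> r * real (OPT VH EH n' (Eof l')) + \<alpha>" using cb by linarith
  also have "\<dots> \<le> r * real (x t) + \<alpha>" using opt' r by (simp add: mult_left_mono)
  finally show ?thesis .
qed

end


context adv_setup begin

lemma main_contra:
  assumes comp: "competitive VH EH A r w" and r1: "r \<ge> 1" and w1: "w \<ge> real (card VH) - 1"
    and k2: "card VH \<ge> 2" and prod: "(w - (real (card VH) - 1)) * (r - 1) < real (card VH) - 1"
  shows False
proof -
  obtain \<alpha> where a0: "\<alpha> \<ge> 0" and H: "\<forall>n E. online_graph n E \<longrightarrow>
        (\<exists>u. correct_advice VH EH n E u \<and> real (cost A n E u) \<le> r * real (OPT VH EH n E) + \<alpha>)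
      \<and> (\<forall>u. real (cost A n E u) \<le> w * real (OPT VH EH n E) + \<alpha>)"
    using comp unfolding competitive_def by blast
  have Hc: "\<forall>n E. online_graph n E \<longrightarrow>
        (\<exists>u. correct_advice VH EH n E u \<and> real (cost A n E u) \<le> r * real (OPT VH EH n E) + \<alpha>)"
    using H by blast
  have Hr: "real (card (D t)) \<le> w * real (OPTt t) + \<alpha>" for t
  proof -
    have "online_graph t (Eof (L t))" using online_Eof[of "L t"] by simp
    then have "real (cost A t (Eof (L t)) (adv (L t))) \<le> w * real (OPT VH EH t (Eof (L t))) + \<alpha>"
      using H by blast
    then show ?thesis using cost_L unfolding OPTt_def by simp
  qed
  define K where "K = real (card VH) - 1"
  have K1: "K \<ge> 1" unfolding K_def using k2 by simp
  have Kn: "real (card VH - 1) = K" unfolding K_def using k2 by (simp add: of_nat_diff)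
  define a where "a = w - K"
  have a0': "a \<ge> 0" unfolding a_def K_def using w1 by simp
  define \<delta> where "\<delta> = K - a * (r - 1)"
  have dpos: "\<delta> > 0" unfolding \<delta>_def a_def K_def using prod by simp
  define Kc where "Kc = a * (\<alpha> + K) + K * K + K * \<alpha>"
  have wpos: "w \<ge> 1" using w1 K1 unfolding K_def by simp
  have A1: "real t - real (card VH) \<le> w * real (x t) + \<alpha>" for t
  proof -
    have "card (D t) + card (U t) = t" by (rule card_D_U)
    moreover have "card (U t) \<le> card VH" by (rule card_U)
    ultimately have "real t - real (card VH) \<le> real (card (D t))" by linarith
    also have "\<dots> \<le> w * real (OPTt t) + \<alpha>" by (rule Hr)
    also have "\<dots> \<le> w * real (x t) + \<alpha>" using opt_x[of t] wpos by (simp add: mult_left_mono)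
    finally show ?thesis .
  qed
  have A2: "\<delta> * real (x t) \<le> Kc" if kill: "killed (L t) h1" for t
  proof -
    define n where "n = real t"
    define xx where "xx = real (x t)"
    define oo where "oo = real (OPTt t)"
    define d where "d = real (card (D t))"
    have i: "d \<le> r * xx + \<alpha>" unfolding d_def xx_def using cons_bound[OF kill _ Hc] r1 by simp
    have ii: "d \<le> w * oo + \<alpha>" unfolding d_def oo_def by (rule Hr)
    have iii: "K * oo + xx \<le> n"
    proof -
      have "real ((card VH - 1) * OPTt t + x t) \<le> real t" using opt_sum[of t] by linarith
      then show ?thesis unfolding oo_def xx_def n_def using Kn by simp
    qed
    have dn: "n - K \<le> d"
    proof -
      have "card (D t) + card (U t) = t" by (rule card_D_U)
      moreover have "card (U t) \<le> card VH - 1" by (rule card_U_killed[OF kill])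
      ultimately have "real t - real (card VH - 1) \<le> real (card (D t))" by linarith
      then show ?thesis unfolding n_def d_def using Kn by simp
    qed
    have oo0: "oo \<ge> 0" unfolding oo_def by simp
    have e1: "K * (n - K) \<le> K * (w * oo + \<alpha>)" using dn ii K1 by (intro mult_left_mono) auto
    have e2: "w * (K * oo) \<le> w * (n - xx)" using iii wpos by (intro mult_left_mono) auto
    have e3: "a * n \<le> a * (r * xx + \<alpha> + K)" using dn i a0' by (intro mult_left_mono) auto
    have f1: "w * xx \<le> a * n + K * K + K * \<alpha>"
      using e1 e2 unfolding a_def by (simp add: algebra_simps)
    have g: "(K - (w-K)*(r-1))*xx = w*xx - (w-K)*(r*xx)" by (simp add: algebra_simps)
    have h: "(w-K)*(r*xx + \<alpha> + K) = (w-K)*(r*xx) + (w-K)*(\<alpha>+K)" by (simp add: algebra_simps)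
    have "\<delta> * xx \<le> Kc" using f1 e3 g h unfolding \<delta>_def Kc_def a_def by linarith
    then show ?thesis unfolding xx_def .
  qed
  obtain N :: nat where N: "Kc / \<delta> < real N" using reals_Archimedean2 by blast
  obtain T :: nat where T: "w * (real N + 1) + real (card VH) + \<alpha> < real T" using reals_Archimedean2 by blast
  have xT: "x T > N"
  proof (rule ccontr)
    assume "\<not> x T > N"
    then have "real (x T) \<le> real N" by simp
    then have "w * real (x T) \<le> w * real N" using wpos by (simp add: mult_left_mono)
    moreover have "w * (real N + 1) = w * real N + w" by (simp add: algebra_simps)
    ultimately show False using A1[of T] T wpos by linarith
  qed
  obtain t where t: "t < T" "x t \<ge> N" "x (Suc t) > x t"
  proof -
    have "x (Suc t) \<le> x t + 1" for t using xSuc[of t] by simp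
    then show ?thesis using grow_lemma[where f=x and T=T and N=N] x0 xT that by blast
  qed
  have "c t = h1" using t(3) xSuc[of t] by (simp split: if_splits)
  then have "killed (L t) h1" using nxt_props[of "L t"] unfolding c_def by simp
  then have "\<delta> * real (x t) \<le> Kc" by (rule A2)
  moreover have "Kc < \<delta> * real N" using N dpos by (simp add: pos_divide_less_eq mult.commute)
  moreover have "\<delta> * real N \<le> \<delta> * real (x t)" using t(2) dpos by (simp add: mult_left_mono)
  ultimately show False by linarith
qed

end


lemma arith_final:
  fixes p r w K :: real
  assumes p: "0 \<le> p" "p < 1" and K: "K \<ge> 1"
    and r: "1 \<le> r" "r < (K + 1) - K / (2 - p)"
    and w: "K \<le> w" "w < (K + 1) + p / (1 - p)"
  shows "(w - K) * (r - 1) < K"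
proof -
  define B where "B = K - K / (2 - p)"
  have a_lt: "w - K < 1 / (1 - p)"
  proof -
    have "1 + p / (1 - p) = 1 / (1 - p)" using p by (simp add: field_simps)
    then show ?thesis using w by linarith
  qed
  have b_lt: "r - 1 < B" unfolding B_def using r by linarith
  have Bpos: "B > 0"
  proof -
    have "K / (2 - p) < K" using p K by (simp add: divide_less_eq)
    then show ?thesis unfolding B_def by simp
  qed
  have "(w - K) * (r - 1) \<le> (w - K) * B" using w(1) b_lt by (intro mult_left_mono) auto
  also have "\<dots> < (1 / (1 - p)) * B" using a_lt Bpos by (intro mult_strict_right_mono) auto
  also have "(1 / (1 - p)) * B = K / (2 - p)"
  proof -
    have n1: "1 - p \<noteq> 0" "2 - p \<noteq> 0" using p by auto
    have "B = K * (1 - p) / (2 - p)" unfolding B_def using n1 by (simp add: field_simps)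
    then show ?thesis using n1 by simp
  qed
  also have "\<dots> \<le> K" using p K by (simp add: divide_le_eq)
  finally show ?thesis .
qed

theorem mainTheorem7:
  fixes VH :: "'h set" and EH :: "'h \<Rightarrow> 'h \<Rightarrow> bool" and k :: nat
    and p :: real and A :: online_alg
  assumes "simple_graph VH EH"
    and "connected_graph VH EH"
    and "k = card VH" and "k > 1"
    and "\<not> has_true_twins VH EH \<or> \<not> has_false_twins VH EH"
    and "0 \<le> p" and "p < 1"
    and "solves VH EH A"
  shows "\<not> (consistency VH EH A < ereal (real k - (real k - 1) / (2 - p))
           \<and> robustness VH EH A < ereal (real k + p / (1 - p)))"
proof
  assume H: "consistency VH EH A < ereal (real k - (real k - 1) / (2 - p))
           \<and> robustness VH EH A < ereal (real k + p / (1 - p))"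
  obtain r1 w1 where c1: "competitive VH EH A r1 w1" and r1: "r1 < real k - (real k - 1) / (2 - p)"
    using H unfolding consistency_def Inf_less_iff by auto
  obtain r2 w2 where c2: "competitive VH EH A r2 w2" and w2: "w2 < real k + p / (1 - p)"
    using H unfolding robustness_def Inf_less_iff by auto
  define K where "K = real k - 1"
  have K1: "K \<ge> 1" unfolding K_def using assms(4) by simp
  have c: "competitive VH EH A r1 w2" by (rule competitive_combine[OF c1 c2])
  define r where "r = max r1 1"
  define w where "w = max w2 K"
  have cc: "competitive VH EH A r w" unfolding r_def w_def
    by (rule competitive_mono[OF c]) auto
  have rlt: "r < (K + 1) - K / (2 - p)"
  proof -
    have "K / (2 - p) < K" using assms(6,7) K1 by (simp add: divide_less_eq)
    then show ?thesis unfolding r_def K_def using r1 by simp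
  qed
  have wlt: "w < (K + 1) + p / (1 - p)"
  proof -
    have "p / (1 - p) \<ge> 0" using assms(6,7) by simp
    then show ?thesis unfolding w_def K_def using w2 by simp
  qed
  have prod: "(w - K) * (r - 1) < K"
    by (rule arith_final[OF assms(6,7) K1 _ rlt _ wlt]) (auto simp: r_def w_def)
  have "VH \<noteq> {}" using assms(3,4) by auto
  then obtain h1 where h1: "h1 \<in> VH" by blast
  define \<tau> where "\<tau> = (\<not> has_true_twins VH EH)"
  have tw: "if \<tau> then \<not> has_true_twins VH EH else \<not> has_false_twins VH EH"
    using assms(5) unfolding \<tau>_def by auto
  interpret adv_setup VH EH \<tau> h1 A
    by unfold_locales (use assms(1,8) h1 tw in auto)
  show False
    by (rule main_contra[OF cc]) (use assms(3,4) prod in \<open>auto simp: r_def w_def K_def\<close>)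
qed


end
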